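(* Let $\mathscr{F}=(S,I,R,\sigma,\sigma_1)$ be a $\varkappa$-frame. Let $\delta:S\to W(S)$ be the unique ring homomorphism with $w_n\circ\delta=\sigma^n$ for all $n\geq 0$, and let $\varkappa:S\to W(R)$ be the composite of $\delta$ with $W(S)\to W(R)$. Then there is a unit $u\in W(R)$ such that $\varkappa$ is a $u$-homomorphism of frames $\mathscr{F}\to\mathscr{W}_R$ inducing the identity on $R$. This construction is functorial in $\mathscr{F}$.
   Context: Fix a prime $p$. A frame is $(S,I,R,\sigma,\sigma_1)$ with $S$ a ring, $I$ an ideal, $R=S/I$, $\sigma$ a ring endomorphism, $\sigma_1:I\to S$ a $\sigma$-linear map, such that $I+pS\subseteq\mathrm{Rad}(S)$, $\sigma(a)\equiv a^p\bmod pS$ for $a\in S$, and $\sigma_1(I)$ generates $S$ as an $S$-module. There is a unique $\theta\in S$ with $\sigma(a)=\theta\sigma_1(a)$ for $a\in I$. A $\varkappa$-frame is a frame such that $S$ has no $p$-torsion, $W(R)$ has no $p$-torsion, and $\sigma(\theta)-\theta^p=p\cdot(\text{unit of }S)$. The Witt frame of a ring $R$ (here $p$-adically complete is not needed beyond the frame axioms) is $\mathscr{W}_R=(W(R),I_R,R,f,f_1)$, $I_R=\ker(W(R)\to R)$, $f$ the Frobenius and $f_1$ the inverse of the Verschiebung $v:W(R)\to I_R$. $w_n$ denotes the $n$-th Witt ghost component. A $u$-homomorphism of frames $\mathscr{F}\to\mathscr{F}'$ is a ring homomorphism $\alpha:S\to S'$ with $\alpha(I)\subseteq I'$, $\sigma'\alpha=\alpha\sigma$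 and $\sigma_1'\alpha=u\cdot\alpha\sigma_1$ for a unit $u\in S'$. *)

theory Defs
  imports Main "HOL-Library.Poly_Mapping" "HOL-Computational_Algebra.Primes"
begin

type_synonym 'v mpoly = "('v \<Rightarrow>\<^sub>0 nat) \<Rightarrow>\<^sub>0 int"

definition mvar :: "'v \<Rightarrow> 'v mpoly" where
  "mvar v = Poly_Mapping.single (Poly_Mapping.single v 1) 1"

definition mpoly_eval :: "('v \<Rightarrow> 'r::comm_ring_1) \<Rightarrow> 'v mpoly \<Rightarrow> 'r" where
  "mpoly_eval f P =
     (\<Sum>m\<in>Poly_Mapping.keys P. of_int (Poly_Mapping.lookup P m) * (\<Prod>v\<in>Poly_Mapping.keys m. f v ^ Poly_Mapping.lookup m v))"

definition witt_ghost :: "nat \<Rightarrow> nat \<Rightarrow> (nat \<Rightarrow> 'r::comm_ring_1) \<Rightarrow> 'r" where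
  "witt_ghost p n x = (\<Sum>i\<le>n. of_nat p ^ i * x i ^ (p ^ (n - i)))"

definition witt_polys :: "nat \<Rightarrow> (nat \<Rightarrow> 'v mpoly) \<Rightarrow> nat \<Rightarrow> 'v mpoly" where
  "witt_polys p G = (THE \<Phi>. \<forall>n. witt_ghost p n \<Phi> = G n)"

definition witt_add_polys :: "nat \<Rightarrow> nat \<Rightarrow> (nat + nat) mpoly" where
  "witt_add_polys p = witt_polys p
     (\<lambda>n. witt_ghost p n (\<lambda>i. mvar (Inl i)) + witt_ghost p n (\<lambda>i. mvar (Inr i)))"

definition witt_mult_polys :: "nat \<Rightarrow> nat \<Rightarrow> (nat + nat) mpoly" where
  "witt_mult_polys p = witt_polys p
     (\<lambda>n. witt_ghost p n (\<lambda>i. mvar (Inl i)) * witt_ghost p n (\<lambda>i. mvar (Inr i)))"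

definition witt_frob_polys :: "nat \<Rightarrow> nat \<Rightarrow> nat mpoly" where
  "witt_frob_polys p = witt_polys p (\<lambda>n. witt_ghost p (Suc n) mvar)"

definition witt_add :: "nat \<Rightarrow> (nat \<Rightarrow> 'r::comm_ring_1) \<Rightarrow> (nat \<Rightarrow> 'r) \<Rightarrow> nat \<Rightarrow> 'r" where
  "witt_add p x y = (\<lambda>n. mpoly_eval (case_sum x y) (witt_add_polys p n))"

definition witt_mult :: "nat \<Rightarrow> (nat \<Rightarrow> 'r::comm_ring_1) \<Rightarrow> (nat \<Rightarrow> 'r) \<Rightarrow> nat \<Rightarrow> 'r" where
  "witt_mult p x y = (\<lambda>n. mpoly_eval (case_sum x y) (witt_mult_polys p n))"

definition witt_zero :: "nat \<Rightarrow> 'r::comm_ring_1" where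
  "witt_zero = (\<lambda>n. 0)"

definition witt_one :: "nat \<Rightarrow> 'r::comm_ring_1" where
  "witt_one = (\<lambda>n. if n = 0 then 1 else 0)"

definition witt_frob :: "nat \<Rightarrow> (nat \<Rightarrow> 'r::comm_ring_1) \<Rightarrow> nat \<Rightarrow> 'r" where
  "witt_frob p x = (\<lambda>n. mpoly_eval x (witt_frob_polys p n))"

text \<open>f_1 : I_R -> W(R), the inverse of the Verschiebung v(x) = (0, x_0, x_1, ...).\<close>
definition witt_f1 :: "(nat \<Rightarrow> 'r) \<Rightarrow> nat \<Rightarrow> 'r" where
  "witt_f1 x = (\<lambda>n. x (Suc n))"

definition witt_nsmul :: "nat \<Rightarrow> nat \<Rightarrow> (nat \<Rightarrow> 'r::comm_ring_1) \<Rightarrow> nat \<Rightarrow> 'r" where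
  "witt_nsmul p k x = ((witt_add p x) ^^ k) witt_zero"

definition witt_unit :: "nat \<Rightarrow> (nat \<Rightarrow> 'r::comm_ring_1) \<Rightarrow> bool" where
  "witt_unit p u \<longleftrightarrow> (\<exists>v. witt_mult p u v = witt_one)"

definition witt_map :: "('a \<Rightarrow> 'b) \<Rightarrow> (nat \<Rightarrow> 'a) \<Rightarrow> nat \<Rightarrow> 'b" where
  "witt_map g x = (\<lambda>n. g (x n))"

definition jacobson_radical :: "'a::comm_ring_1 set" where
  "jacobson_radical = {a. \<forall>b. (1 - a * b) dvd 1}"

definition ring_hom_on :: "('a::comm_ring_1 \<Rightarrow> 'b::comm_ring_1) \<Rightarrow> bool" where
  "ring_hom_on f \<longleftrightarrow> (\<forall>a b. f (a + b) = f a + f b) \<and> (\<forall>a b. f (a * b) = f a * f b) \<and> f 1 = 1"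

text \<open>A frame (S, I, R, sigma, sigma_1); S is the ring of type 'a, and R = S/I is given
  (up to unique isomorphism) by a surjective ring homomorphism pi : S -> R with kernel I.\<close>
definition frame ::
  "nat \<Rightarrow> 'a::comm_ring_1 set \<Rightarrow> ('a \<Rightarrow> 'r::comm_ring_1) \<Rightarrow> ('a \<Rightarrow> 'a) \<Rightarrow> ('a \<Rightarrow> 'a) \<Rightarrow> bool" where
  "frame p I \<pi> \<sigma> \<sigma>1 \<longleftrightarrow>
     ring_hom_on \<pi> \<and> surj \<pi> \<and> I = {a. \<pi> a = 0} \<and>
     ring_hom_on \<sigma> \<and>
     (\<forall>a\<in>I. \<forall>b\<in>I. \<sigma>1 (a + b) = \<sigma>1 a + \<sigma>1 b) \<and>
     (\<forall>s. \<forall>a\<in>I. \<sigma>1 (s * a) = \<sigma> s * \<sigma>1 a) \<and>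
     (\<forall>a\<in>I. \<forall>s. a + of_nat p * s \<in> jacobson_radical) \<and>
     (\<forall>a. \<exists>s. \<sigma> a - a ^ p = of_nat p * s) \<and>
     (\<forall>x. \<exists>(k::nat) c b. (\<forall>i<k. b i \<in> I) \<and> x = (\<Sum>i<k. c i * \<sigma>1 (b i)))"

definition kappa_frame ::
  "nat \<Rightarrow> 'a::comm_ring_1 set \<Rightarrow> ('a \<Rightarrow> 'r::comm_ring_1) \<Rightarrow> ('a \<Rightarrow> 'a) \<Rightarrow> ('a \<Rightarrow> 'a) \<Rightarrow> bool" where
  "kappa_frame p I \<pi> \<sigma> \<sigma>1 \<longleftrightarrow>
     frame p I \<pi> \<sigma> \<sigma>1 \<and>
     (\<forall>a::'a. of_nat p * a = 0 \<longrightarrow> a = 0) \<and>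
     (\<forall>x::nat \<Rightarrow> 'r. witt_nsmul p p x = witt_zero \<longrightarrow> x = witt_zero) \<and>
     (\<exists>\<theta>. (\<forall>a\<in>I. \<sigma> a = \<theta> * \<sigma>1 a) \<and>
          (\<exists>e. e dvd 1 \<and> \<sigma> \<theta> - \<theta> ^ p = of_nat p * e))"

definition frame_uhom ::
  "'a::comm_ring_1 set \<Rightarrow> ('a \<Rightarrow> 'a) \<Rightarrow> ('a \<Rightarrow> 'a) \<Rightarrow>
   'b::comm_ring_1 set \<Rightarrow> ('b \<Rightarrow> 'b) \<Rightarrow> ('b \<Rightarrow> 'b) \<Rightarrow> 'b \<Rightarrow> ('a \<Rightarrow> 'b) \<Rightarrow> bool" where
  "frame_uhom I \<sigma> \<sigma>1 I' \<sigma>' \<sigma>1' u \<alpha> \<longleftrightarrow>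
     u dvd 1 \<and> ring_hom_on \<alpha> \<and> \<alpha> ` I \<subseteq> I' \<and>
     (\<forall>a. \<sigma>' (\<alpha> a) = \<alpha> (\<sigma> a)) \<and>
     (\<forall>a\<in>I. \<sigma>1' (\<alpha> a) = u * \<alpha> (\<sigma>1 a))"

definition witt_frame_uhom ::
  "nat \<Rightarrow> 'a::comm_ring_1 set \<Rightarrow> ('a \<Rightarrow> 'a) \<Rightarrow> ('a \<Rightarrow> 'a) \<Rightarrow>
   (nat \<Rightarrow> 'r::comm_ring_1) \<Rightarrow> ('a \<Rightarrow> nat \<Rightarrow> 'r) \<Rightarrow> bool" where
  "witt_frame_uhom p I \<sigma> \<sigma>1 u \<alpha> \<longleftrightarrow>
     witt_unit p u \<and>
     (\<forall>a b. \<alpha> (a + b) = witt_add p (\<alpha> a) (\<alpha> b)) \<and>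
     (\<forall>a b. \<alpha> (a * b) = witt_mult p (\<alpha> a) (\<alpha> b)) \<and>
     \<alpha> 1 = witt_one \<and>
     (\<forall>a\<in>I. \<alpha> a 0 = 0) \<and>
     (\<forall>a. witt_frob p (\<alpha> a) = \<alpha> (\<sigma> a)) \<and>
     (\<forall>a\<in>I. witt_f1 (\<alpha> a) = witt_mult p u (\<alpha> (\<sigma>1 a)))"

definition witt_delta :: "nat \<Rightarrow> ('a::comm_ring_1 \<Rightarrow> 'a) \<Rightarrow> ('a \<Rightarrow> nat \<Rightarrow> 'a) \<Rightarrow> bool" where
  "witt_delta p \<sigma> \<delta> \<longleftrightarrow>
     (\<forall>a b. \<delta> (a + b) = witt_add p (\<delta> a) (\<delta> b)) \<and>
     (\<forall>a b. \<delta> (a * b) = witt_mult p (\<delta> a) (\<delta> b)) \<and>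
     \<delta> 1 = witt_one \<and>
     (\<forall>a n. witt_ghost p n (\<delta> a) = (\<sigma> ^^ n) a)"

end

theory Submission
  imports Defs "HOL-Number_Theory.Number_Theory"
begin



lemma rh_add: "ring_hom_on g \<Longrightarrow> g (a + b) = g a + g b" by (simp add: ring_hom_on_def)
lemma rh_mult: "ring_hom_on g \<Longrightarrow> g (a * b) = g a * g b" by (simp add: ring_hom_on_def)
lemma rh_one: "ring_hom_on g \<Longrightarrow> g 1 = 1" by (simp add: ring_hom_on_def)
lemma rh_zero: "ring_hom_on g \<Longrightarrow> g 0 = 0"
proof -
  assume h: "ring_hom_on g"
  have "g 0 = g 0 + g 0" using rh_add[OF h, of 0 0] by simp
  thus ?thesis by simp
qed
lemma rh_uminus: "ring_hom_on g \<Longrightarrow> g (- a) = - g a"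
proof -
  assume h: "ring_hom_on g"
  have "g a + g (- a) = 0" using rh_add[OF h, of a "-a"] rh_zero[OF h] by simp
  thus ?thesis by (simp add: eq_neg_iff_add_eq_0 add.commute)
qed
lemma rh_diff: "ring_hom_on g \<Longrightarrow> g (a - b) = g a - g b"
  using rh_add[of g a "-b"] rh_uminus[of g b] by simp
lemma rh_sum: "ring_hom_on g \<Longrightarrow> g (sum f A) = sum (\<lambda>x. g (f x)) A"
  by (induction A rule: infinite_finite_induct) (auto simp: rh_zero rh_add)
lemma rh_prod: "ring_hom_on g \<Longrightarrow> g (prod f A) = prod (\<lambda>x. g (f x)) A"
  by (induction A rule: infinite_finite_induct) (auto simp: rh_one rh_mult)
lemma rh_pow: "ring_hom_on g \<Longrightarrow> g (a ^ n) = g a ^ n"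
  by (induction n) (auto simp: rh_one rh_mult)
lemma rh_of_nat: "ring_hom_on g \<Longrightarrow> g (of_nat n) = of_nat n"
  by (induction n) (auto simp: rh_one rh_add rh_zero)
lemma rh_of_int: "ring_hom_on g \<Longrightarrow> g (of_int k) = of_int k"
  by (cases k) (auto simp: rh_of_nat rh_uminus rh_diff rh_one)
lemma rh_comp: "ring_hom_on g \<Longrightarrow> ring_hom_on h \<Longrightarrow> ring_hom_on (g \<circ> h)"
  by (simp add: ring_hom_on_def)
lemma rh_id: "ring_hom_on id" by (simp add: ring_hom_on_def)

definition mmono :: "('v \<Rightarrow> 'r::comm_ring_1) \<Rightarrow> ('v \<Rightarrow>\<^sub>0 nat) \<Rightarrow> 'r" where
  "mmono f m = (\<Prod>v\<in>Poly_Mapping.keys m. f v ^ Poly_Mapping.lookup m v)"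

lemma mpoly_eval_mono: "mpoly_eval f P = (\<Sum>m\<in>Poly_Mapping.keys P. of_int (Poly_Mapping.lookup P m) * mmono f m)"
  by (simp add: mpoly_eval_def mmono_def)

lemma eval_superset:
  assumes "finite K" "Poly_Mapping.keys P \<subseteq> K"
  shows "mpoly_eval f P = (\<Sum>m\<in>K. of_int (Poly_Mapping.lookup P m) * mmono f m)"
  unfolding mpoly_eval_mono
  by (rule sum.mono_neutral_left) (use assms in \<open>auto simp: in_keys_iff\<close>)

lemma mono_superset:
  assumes "finite K" "Poly_Mapping.keys m \<subseteq> K"
  shows "mmono f m = (\<Prod>v\<in>K. f v ^ Poly_Mapping.lookup m v)"
  unfolding mmono_def
  by (rule prod.mono_neutral_left) (use assms in \<open>auto simp: in_keys_iff\<close>)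

lemma eval_add: "mpoly_eval f (P + Q) = mpoly_eval f P + mpoly_eval f Q"
proof -
  let ?K = "Poly_Mapping.keys P \<union> Poly_Mapping.keys Q"
  have k: "Poly_Mapping.keys (P + Q) \<subseteq> ?K" by (rule keys_add)
  show ?thesis
    by (subst (1 2 3) eval_superset[where K="?K"]) 
       (use k in \<open>auto simp: lookup_add sum.distrib algebra_simps\<close>)
qed

lemma eval_zero: "mpoly_eval f 0 = 0" by (simp add: mpoly_eval_def)

lemma eval_uminus: "mpoly_eval f (- P) = - mpoly_eval f P"
  by (simp add: mpoly_eval_mono keys_minus sum_negf)

lemma eval_diff: "mpoly_eval f (P - Q) = mpoly_eval f P - mpoly_eval f Q"
  using eval_add[of f P "-Q"] eval_uminus[of f Q] by simp

lemma eval_single: "mpoly_eval f (Poly_Mapping.single m c) = of_int c * mmono f m"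
  by (cases "c = 0") (auto simp: mpoly_eval_mono)

lemma mono_add: "mmono f (m + n) = mmono f m * mmono f n"
proof -
  let ?K = "Poly_Mapping.keys m \<union> Poly_Mapping.keys n"
  have k: "Poly_Mapping.keys (m + n) \<subseteq> ?K" by (rule keys_add)
  show ?thesis
    by (subst (1 2 3) mono_superset[where K="?K"])
       (use k in \<open>auto simp: lookup_add power_add prod.distrib\<close>)
qed

lemma mono_zero: "mmono f 0 = 1" by (simp add: mmono_def)

lemma eval_mult_single: "mpoly_eval f (Poly_Mapping.single m 1 * Q) = mmono f m * mpoly_eval f Q"
proof -
  have "Poly_Mapping.keys Q \<subseteq> Poly_Mapping.keys Q" by simp
  then show ?thesis
  proof (induction Q rule: frag_induction)
    case zero then show ?case by (simp add: eval_zero)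
  next
    case (one x) then show ?case by (simp add: mult_single eval_single mono_add)
  next
    case (diff a b) then show ?case by (simp add: right_diff_distrib eval_diff)
  qed
qed

lemma eval_mult: "mpoly_eval f (P * Q) = mpoly_eval f P * mpoly_eval f Q"
proof -
  have "Poly_Mapping.keys P \<subseteq> Poly_Mapping.keys P" by simp
  then show ?thesis
  proof (induction P rule: frag_induction)
    case zero then show ?case by (simp add: eval_zero)
  next
    case (one x) then show ?case by (simp add: eval_mult_single eval_single)
  next
    case (diff a b) then show ?case by (simp add: left_diff_distrib eval_diff)
  qed
qed

lemma eval_one: "mpoly_eval f 1 = 1"
  using eval_single[of f 0 1] by (simp add: mono_zero)

lemma eval_rh: "ring_hom_on (mpoly_eval f)"
  by (simp add: ring_hom_on_def eval_add eval_mult eval_one)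

lemma eval_mvar: "mpoly_eval f (mvar v) = f v"
  by (simp add: mvar_def eval_single mmono_def)

lemma eval_nat: "ring_hom_on g \<Longrightarrow> g (mpoly_eval f P) = mpoly_eval (g \<circ> f) P"
  by (simp add: mpoly_eval_def rh_sum rh_mult rh_of_int rh_prod rh_pow)




lemma fresh_dvd:
  fixes x y :: "'a::comm_ring_1"
  assumes "prime p"
  shows "of_nat p dvd ((x + y) ^ p - x ^ p - y ^ p)"
proof -
  have p0: "p > 0" using assms prime_gt_0_nat by blast
  have fin: "finite {..p}" by simp
  have sub: "{0,p} \<subseteq> {..p}" by auto
  have "(x + y) ^ p = (\<Sum>k\<le>p. of_nat (p choose k) * x ^ k * y ^ (p - k))"
    by (rule binomial_ring)
  also have "\<dots> = (\<Sum>k\<in>{..p} - {0,p}. of_nat (p choose k) * x ^ k * y ^ (p - k)) + (\<Sum>k\<in>{0,p}. of_nat (p choose k) * x ^ k * y ^ (p - k))"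
    by (rule sum.subset_diff[OF sub fin])
  also have "(\<Sum>k\<in>{0,p}. of_nat (p choose k) * x ^ k * y ^ (p - k)) = y ^ p + x ^ p"
    using p0 by simp
  finally have eq: "(x + y) ^ p - x ^ p - y ^ p = (\<Sum>k\<in>{..p} - {0,p}. of_nat (p choose k) * x ^ k * y ^ (p - k))"
    by simp
  have "of_nat p dvd (\<Sum>k\<in>{..p} - {0,p}. of_nat (p choose k) * x ^ k * y ^ (p - k))"
  proof (rule dvd_sum)
    fix k assume k: "k \<in> {..p} - {0,p}"
    have "p dvd (p choose k)" by (rule dvd_choose_prime) (use k assms p0 in auto)
    then obtain q where "p choose k = p * q" by (auto simp: dvd_def)
    then have "(of_nat (p choose k) :: 'a) = of_nat p * of_nat q" by simp
    then show "of_nat p dvd of_nat (p choose k) * x ^ k * y ^ (p - k)" by (simp add: mult.assoc)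
  qed
  with eq show ?thesis by simp
qed

lemma pow_p_step:
  fixes a b :: "'a::comm_ring_1"
  assumes "prime p" "j \<ge> 1" "of_nat p ^ j dvd (a - b)"
  shows "of_nat p ^ Suc j dvd (a ^ p - b ^ p)"
proof -
  have e: "a ^ p - b ^ p = (a - b) * (\<Sum>i<p. b ^ (p - Suc i) * a ^ i)" by (rule power_diff_sumr2)
  obtain j' where j': "j = Suc j'" using assms(2) by (cases j) auto
  have pd: "of_nat p dvd (a - b)" using assms(3) unfolding j' by (auto intro: dvd_mult_left)
  have A: "(\<Sum>i<p. b ^ (p - Suc i) * a ^ i) - (\<Sum>i<p. b ^ (p - Suc i) * b ^ i)
        = (\<Sum>i<p. b ^ (p - Suc i) * (a ^ i - b ^ i))"
    by (simp add: sum_subtractf right_diff_distrib)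
  have B: "of_nat p dvd (\<Sum>i<p. b ^ (p - Suc i) * (a ^ i - b ^ i))"
  proof (rule dvd_sum)
    fix i
    have "(a - b) dvd (a ^ i - b ^ i)" by (simp add: power_diff_sumr2)
    then have "of_nat p dvd (a ^ i - b ^ i)" using pd by (rule dvd_trans[rotated])
    then show "of_nat p dvd b ^ (p - Suc i) * (a ^ i - b ^ i)" by (rule dvd_mult)
  qed
  have C: "(\<Sum>i<p. b ^ (p - Suc i) * b ^ i) = of_nat p * b ^ (p - 1)"
  proof -
    have "(\<Sum>i<p. b ^ (p - Suc i) * b ^ i) = (\<Sum>i<p. b ^ (p - 1))"
      by (rule sum.cong) (auto simp flip: power_add)
    then show ?thesis by simp
  qed
  have D: "of_nat p dvd (\<Sum>i<p. b ^ (p - Suc i) * a ^ i)"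
  proof -
    have "(\<Sum>i<p. b ^ (p - Suc i) * a ^ i) = (\<Sum>i<p. b ^ (p - Suc i) * (a ^ i - b ^ i)) + of_nat p * b ^ (p - 1)"
      using A C by (simp add: algebra_simps)
    then show ?thesis using B by simp
  qed
  have "of_nat p ^ j * of_nat p dvd (a - b) * (\<Sum>i<p. b ^ (p - Suc i) * a ^ i)"
    using assms(3) D by (rule mult_dvd_mono)
  then show ?thesis using e by (simp add: mult.commute)
qed

lemma pow_pk:
  fixes a b :: "'a::comm_ring_1"
  assumes "prime p" "of_nat p dvd (a - b)"
  shows "of_nat p ^ Suc k dvd (a ^ (p ^ k) - b ^ (p ^ k))"
proof (induction k)
  case 0 then show ?case using assms by simp
next
  case (Suc k)
  have "of_nat p ^ Suc (Suc k) dvd ((a ^ (p ^ k)) ^ p - (b ^ (p ^ k)) ^ p)"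
    by (rule pow_p_step[OF assms(1) _ Suc]) simp
  then show ?case by (metis power_mult power_Suc mult.commute)
qed

lemma ghost_cong: "(\<And>i. i \<le> n \<Longrightarrow> x i = y i) \<Longrightarrow> witt_ghost p n x = witt_ghost p n y"
  unfolding witt_ghost_def by (rule sum.cong) auto

lemma ghost_Suc: "witt_ghost p (Suc n) x = (\<Sum>i\<le>n. of_nat p ^ i * x i ^ (p ^ (Suc n - i))) + of_nat p ^ Suc n * x (Suc n)"
  unfolding witt_ghost_def by simp

lemma ghost_0: "witt_ghost p 0 x = x 0"
  unfolding witt_ghost_def by simp

lemma ghost_split: "witt_ghost p n x = (\<Sum>i<n. of_nat p ^ i * x i ^ (p ^ (n - i))) + of_nat p ^ n * x n"
  unfolding witt_ghost_def by (simp add: lessThan_Suc_atMost[symmetric])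

lemma tf_pow:
  fixes a :: "'a::comm_ring_1"
  assumes tf: "\<forall>a::'a. of_nat p * a = 0 \<longrightarrow> a = 0"
  shows "of_nat p ^ n * a = 0 \<Longrightarrow> a = 0"
proof (induction n arbitrary: a)
  case 0 then show ?case by simp
next
  case (Suc n)
  have "of_nat p ^ n * (of_nat p * a) = 0" using Suc.prems by (metis power_Suc2 mult.assoc)
  then have "of_nat p * a = 0" by (rule Suc.IH)
  then show ?case using tf by blast
qed


lemma tf_cancel:
  fixes a b :: "'a::comm_ring_1"
  assumes tf: "\<forall>a::'a. of_nat p * a = 0 \<longrightarrow> a = 0"
  shows "of_nat p ^ n * a = of_nat p ^ n * b \<Longrightarrow> a = b"
  using tf_pow[OF tf, of n "a - b"] by (simp add: right_diff_distrib)

lemma ghost_trunc_inj: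
  fixes x y :: "nat \<Rightarrow> 'a::comm_ring_1"
  assumes tf: "\<forall>a::'a. of_nat p * a = 0 \<longrightarrow> a = 0"
    and eq: "\<And>k. k \<le> N \<Longrightarrow> witt_ghost p k x = witt_ghost p k y"
  shows "k \<le> N \<Longrightarrow> x k = y k"
proof (induction k rule: less_induct)
  case (less k)
  have "(\<Sum>i<k. of_nat p ^ i * x i ^ (p ^ (k - i))) = (\<Sum>i<k. of_nat p ^ i * y i ^ (p ^ (k - i)))"
    by (rule sum.cong) (use less in auto)
  with eq[OF less.prems] have "of_nat p ^ k * x k = of_nat p ^ k * y k"
    by (simp add: ghost_split[of p k])
  then show ?case by (rule tf_cancel[OF tf])
qed

lemma ghost_inj:
  fixes x y :: "nat \<Rightarrow> 'a::comm_ring_1"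
  assumes tf: "\<forall>a::'a. of_nat p * a = 0 \<longrightarrow> a = 0"
    and eq: "\<And>k. witt_ghost p k x = witt_ghost p k y"
  shows "x = y"
proof
  fix k show "x k = y k" by (rule ghost_trunc_inj[OF tf, of k]) (use eq in auto)
qed

lemma ghost_rh: "ring_hom_on g \<Longrightarrow> g (witt_ghost p n x) = witt_ghost p n (\<lambda>i. g (x i))"
  unfolding witt_ghost_def by (simp add: rh_sum rh_mult rh_pow rh_of_nat)

lemma mpoly_tf:
  assumes "p \<noteq> 0"
  shows "\<forall>a::'v mpoly. of_nat p * a = 0 \<longrightarrow> a = 0"
proof (intro allI impI)
  fix a :: "'v mpoly" assume h: "of_nat p * a = 0"
  have "of_nat p * a = Poly_Mapping.map ((*) (of_nat p)) a"
    by (simp add: mult_map_scale_conv_mult)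
  then have "\<And>k. Poly_Mapping.lookup (Poly_Mapping.map ((*) (of_nat p)) a) k = 0" using h by simp
  then have h2: "\<And>k. (if Poly_Mapping.lookup a k \<noteq> 0 then int p * Poly_Mapping.lookup a k else 0) = 0"
    by (simp add: Poly_Mapping.map.rep_eq when_def)
  have "\<And>k. Poly_Mapping.lookup a k = 0"
  proof -
    fix k show "Poly_Mapping.lookup a k = 0" using h2[of k] assms by (auto split: if_splits)
  qed
  then show "a = 0" by (simp add: poly_mapping_eqI)
qed

lemma single_pow: "Poly_Mapping.single (Poly_Mapping.single v (Suc 0)) (1::int) ^ n = Poly_Mapping.single (Poly_Mapping.single v n) 1"
  by (induction n) (auto simp: mult_single single_add[symmetric])

lemma prod_singles:
  "finite A \<Longrightarrow> (\<Prod>v\<in>A. Poly_Mapping.single (Poly_Mapping.single v (Suc 0)) (1::int) ^ e v)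
     = Poly_Mapping.single (\<Sum>v\<in>A. Poly_Mapping.single v (e v)) 1"
proof (induction A rule: finite_induct)
  case empty then show ?case by simp
next
  case (insert x F)
  have "(\<Prod>v\<in>insert x F. Poly_Mapping.single (Poly_Mapping.single v (Suc 0)) (1::int) ^ e v)
     = Poly_Mapping.single (Poly_Mapping.single x (Suc 0)) (1::int) ^ e x * (\<Prod>v\<in>F. Poly_Mapping.single (Poly_Mapping.single v (Suc 0)) (1::int) ^ e v)"
    using insert.hyps by (rule prod.insert)
  also have "\<dots> = Poly_Mapping.single (Poly_Mapping.single x (e x)) 1 * Poly_Mapping.single (\<Sum>v\<in>F. Poly_Mapping.single v (e v)) 1"
    by (subst insert.IH) (simp only: single_pow)
  also have "\<dots> = Poly_Mapping.single (Poly_Mapping.single x (e x) + (\<Sum>v\<in>F. Poly_Mapping.single v (e v))) 1"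
    by (simp only: mult_single mult_1)
  also have "Poly_Mapping.single x (e x) + (\<Sum>v\<in>F. Poly_Mapping.single v (e v)) = (\<Sum>v\<in>insert x F. Poly_Mapping.single v (e v))"
    using insert.hyps by (simp add: sum.insert)
  finally show ?case .
qed


lemma pm_expand: "(\<Sum>v\<in>Poly_Mapping.keys m. Poly_Mapping.single v (Poly_Mapping.lookup m v)) = (m :: 'v \<Rightarrow>\<^sub>0 nat)"
proof (rule poly_mapping_eqI)
  fix k
  show "Poly_Mapping.lookup (\<Sum>v\<in>Poly_Mapping.keys m. Poly_Mapping.single v (Poly_Mapping.lookup m v)) k = Poly_Mapping.lookup m k"
    by (simp add: lookup_sum lookup_single when_def in_keys_iff)
qed

lemma mono_mvar: "mmono mvar m = Poly_Mapping.single m 1"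
  unfolding mmono_def mvar_def by (simp add: prod_singles pm_expand)

definition phi :: "nat \<Rightarrow> 'v mpoly \<Rightarrow> 'v mpoly" where
  "phi p = mpoly_eval (\<lambda>v. mvar v ^ p)"

lemma phi_rh: "ring_hom_on (phi p)" by (simp add: phi_def eval_rh)

lemma phi_mvar: "phi p (mvar v) = mvar v ^ p" by (simp add: phi_def eval_mvar)

lemma phi_cong:
  assumes "prime p"
  shows "of_nat p dvd (phi p P - P ^ p)"
proof -
  have p0: "p > 0" using assms prime_gt_0_nat by blast
  have "Poly_Mapping.keys P \<subseteq> Poly_Mapping.keys P" by simp
  then show ?thesis
  proof (induction P rule: frag_induction)
    case zero then show ?case using p0 by (simp add: phi_def eval_zero power_0_left)
  next
    case (one m)
    have "phi p (Poly_Mapping.single m 1) = mmono (\<lambda>v. mvar v ^ p) m"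
      by (simp add: phi_def eval_single)
    also have "\<dots> = (mmono mvar m) ^ p"
      by (simp add: mmono_def prod_power_distrib power_mult[symmetric] mult.commute)
    finally show ?case by (simp add: mono_mvar)
  next
    case (diff a b)
    have "phi p (a - b) - (a - b) ^ p = (phi p a - a ^ p) - (phi p b - b ^ p) + ((a - b + b) ^ p - (a - b) ^ p - b ^ p)"
      by (simp add: rh_diff[OF phi_rh] algebra_simps)
    moreover have "of_nat p dvd ((phi p a - a ^ p) - (phi p b - b ^ p) + ((a - b + b) ^ p - (a - b) ^ p - b ^ p))"
      by (rule dvd_add[OF dvd_diff[OF diff(1) diff(2)] fresh_dvd[OF assms]])
    ultimately show ?case by (metis (no_types, lifting))
  qed
qed




section \<open>Existence of Witt polynomials\<close>

lemma phi_ghost_gen: "phi p (witt_ghost p n x) = witt_ghost p n (\<lambda>i. phi p (x i))"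
  by (rule ghost_rh[OF phi_rh])

lemma phi_ghost_mvar:
  "phi p (witt_ghost p n (\<lambda>i. mvar (f i))) = witt_ghost p (Suc n) (\<lambda>i. mvar (f i)) - of_nat p ^ Suc n * mvar (f (Suc n))"
proof -
  have "phi p (witt_ghost p n (\<lambda>i. mvar (f i))) = (\<Sum>i\<le>n. of_nat p ^ i * (mvar (f i) ^ p) ^ (p ^ (n - i)))"
    by (subst phi_ghost_gen) (simp add: phi_mvar witt_ghost_def)
  also have "\<dots> = (\<Sum>i\<le>n. of_nat p ^ i * mvar (f i) ^ (p ^ (Suc n - i)))"
  proof (rule sum.cong)
    fix i assume "i \<in> {..n}"
    then have "Suc n - i = Suc (n - i)" by auto
    then show "of_nat p ^ i * (mvar (f i) ^ p) ^ (p ^ (n - i)) = of_nat p ^ i * mvar (f i) ^ (p ^ (Suc n - i))"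
      by (simp add: power_mult[symmetric])
  qed simp
  finally show ?thesis by (simp add: ghost_Suc)
qed

lemma trunc_exists:
  fixes G :: "nat \<Rightarrow> 'v mpoly"
  assumes pr: "prime p"
    and compat: "\<And>n. of_nat p ^ Suc n dvd (G (Suc n) - phi p (G n))"
  shows "\<exists>\<Psi>. \<forall>k\<le>N. witt_ghost p k \<Psi> = G k"
proof (induction N)
  case 0
  show ?case by (rule exI[of _ "\<lambda>_. G 0"]) (simp add: ghost_0)
next
  case (Suc N)
  then obtain \<Psi> where \<Psi>: "\<forall>k\<le>N. witt_ghost p k \<Psi> = G k" by blast
  define D where "D = G (Suc N) - (\<Sum>i\<le>N. of_nat p ^ i * \<Psi> i ^ (p ^ (Suc N - i)))"
  have GN: "G N = witt_ghost p N \<Psi>" using \<Psi> by simp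
  have phiG: "phi p (G N) = (\<Sum>i\<le>N. of_nat p ^ i * phi p (\<Psi> i) ^ (p ^ (N - i)))"
    unfolding GN phi_ghost_gen by (simp add: witt_ghost_def)
  have "D = (G (Suc N) - phi p (G N)) + (\<Sum>i\<le>N. of_nat p ^ i * (phi p (\<Psi> i) ^ (p ^ (N - i)) - \<Psi> i ^ (p ^ (Suc N - i))))"
    unfolding D_def phiG by (simp add: right_diff_distrib sum_subtractf)
  moreover have "of_nat p ^ Suc N dvd (\<Sum>i\<le>N. of_nat p ^ i * (phi p (\<Psi> i) ^ (p ^ (N - i)) - \<Psi> i ^ (p ^ (Suc N - i))))"
  proof (rule dvd_sum)
    fix i assume i: "i \<in> {..N}"
    have "of_nat p ^ Suc (N - i) dvd (phi p (\<Psi> i) ^ (p ^ (N - i)) - (\<Psi> i ^ p) ^ (p ^ (N - i)))"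
      by (rule pow_pk[OF pr phi_cong[OF pr]])
    moreover have "(\<Psi> i ^ p) ^ (p ^ (N - i)) = \<Psi> i ^ (p ^ (Suc N - i))"
    proof -
      have "Suc N - i = Suc (N - i)" using i by auto
      then show ?thesis by (simp add: power_mult[symmetric])
    qed
    ultimately have "of_nat p ^ i * of_nat p ^ Suc (N - i) dvd of_nat p ^ i * (phi p (\<Psi> i) ^ (p ^ (N - i)) - \<Psi> i ^ (p ^ (Suc N - i)))"
      by (simp add: mult_dvd_mono)
    moreover have "of_nat p ^ i * of_nat p ^ Suc (N - i) = (of_nat p ^ Suc N :: 'v mpoly)"
    proof -
      have "i + Suc (N - i) = Suc N" using i by simp
      then show ?thesis by (metis power_add)
    qed
    ultimately show "of_nat p ^ Suc N dvd of_nat p ^ i * (phi p (\<Psi> i) ^ (p ^ (N - i)) - \<Psi> i ^ (p ^ (Suc N - i)))"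
      by simp
  qed
  ultimately have "of_nat p ^ Suc N dvd D" using compat[of N] by simp
  then obtain q where q: "D = of_nat p ^ Suc N * q" by (auto simp: dvd_def)
  define \<Psi>' where "\<Psi>' = \<Psi>(Suc N := q)"
  have "\<forall>k\<le>Suc N. witt_ghost p k \<Psi>' = G k"
  proof (intro allI impI)
    fix k assume k: "k \<le> Suc N"
    show "witt_ghost p k \<Psi>' = G k"
    proof (cases "k \<le> N")
      case True
      have "witt_ghost p k \<Psi>' = witt_ghost p k \<Psi>"
        by (rule ghost_cong) (use True in \<open>auto simp: \<Psi>'_def\<close>)
      then show ?thesis using \<Psi> True by simp
    next
      case False
      then have kk: "k = Suc N" using k by simp
      have "(\<Sum>i\<le>N. of_nat p ^ i * \<Psi>' i ^ (p ^ (Suc N - i))) = (\<Sum>i\<le>N. of_nat p ^ i * \<Psi> i ^ (p ^ (Suc N - i)))"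
        by (rule sum.cong) (auto simp: \<Psi>'_def)
      then show ?thesis unfolding kk ghost_Suc using q by (simp add: \<Psi>'_def D_def algebra_simps)
    qed
  qed
  then show ?case by blast
qed

lemma witt_polys_prop:
  fixes G :: "nat \<Rightarrow> 'v mpoly"
  assumes pr: "prime p"
    and compat: "\<And>n. of_nat p ^ Suc n dvd (G (Suc n) - phi p (G n))"
  shows "witt_ghost p n (witt_polys p G) = G n"
proof -
  have p0: "p \<noteq> 0" using pr by auto
  have tf: "\<forall>a::'v mpoly. of_nat p * a = 0 \<longrightarrow> a = 0" by (rule mpoly_tf[OF p0])
  have "\<forall>N. \<exists>\<Psi>. \<forall>k\<le>N. witt_ghost p k \<Psi> = G k"
    using trunc_exists[OF pr compat] by blast
  then obtain F where F0: "\<forall>N. \<forall>k\<le>N. witt_ghost p k (F N) = G k"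
    using choice[OF \<open>\<forall>N. \<exists>\<Psi>. \<forall>k\<le>N. witt_ghost p k \<Psi> = G k\<close>] by blast
  have F: "\<And>N k. k \<le> N \<Longrightarrow> witt_ghost p k (F N) = G k" using F0 by blast
  define \<Phi> where "\<Phi> = (\<lambda>n. F n n)"
  have ex: "\<forall>n. witt_ghost p n \<Phi> = G n"
  proof
    fix n
    have "\<And>k. k \<le> n \<Longrightarrow> \<Phi> k = F n k"
    proof -
      fix k assume k: "k \<le> n"
      have "F k k = F n k"
        by (rule ghost_trunc_inj[OF tf, where x="F k" and y="F n" and N=k and k=k]) (use F k in auto)
      then show "\<Phi> k = F n k" unfolding \<Phi>_def by simp
    qed
    then have "witt_ghost p n \<Phi> = witt_ghost p n (F n)" by (rule ghost_cong)
    then show "witt_ghost p n \<Phi> = G n" using F by simp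
  qed
  have uniq: "\<And>\<Psi>. \<forall>n. witt_ghost p n \<Psi> = G n \<Longrightarrow> \<Psi> = \<Phi>"
    by (rule ghost_inj[OF tf]) (use ex in auto)
  have "witt_polys p G = \<Phi>"
    unfolding witt_polys_def by (rule the_equality[of "\<lambda>\<Psi>. \<forall>n. witt_ghost p n \<Psi> = G n" \<Phi>, OF ex uniq])
  then show ?thesis using ex by simp
qed

lemma add_prop:
  assumes "prime p"
  shows "witt_ghost p n (witt_add_polys p) = witt_ghost p n (\<lambda>i. mvar (Inl i)) + witt_ghost p n (\<lambda>i. mvar (Inr i))"
  unfolding witt_add_polys_def
proof (rule witt_polys_prop[OF assms])
  fix n
  show "of_nat p ^ Suc n dvd
        (witt_ghost p (Suc n) (\<lambda>i. mvar (Inl i)) + witt_ghost p (Suc n) (\<lambda>i. mvar (Inr i)) -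
         phi p (witt_ghost p n (\<lambda>i. mvar (Inl i)) + witt_ghost p n (\<lambda>i. mvar (Inr i))))"
  proof -
    let ?P = "of_nat p ^ Suc n :: (nat + nat) mpoly"
    have "witt_ghost p (Suc n) (\<lambda>i. mvar (Inl i)) + witt_ghost p (Suc n) (\<lambda>i. mvar (Inr i)) -
         phi p (witt_ghost p n (\<lambda>i. mvar (Inl i)) + witt_ghost p n (\<lambda>i. mvar (Inr i)))
      = ?P * (mvar (Inl (Suc n)) + mvar (Inr (Suc n)))"
      by (simp add: rh_add[OF phi_rh] phi_ghost_mvar[of p n Inl, simplified] phi_ghost_mvar[of p n Inr, simplified]
        algebra_simps)
    then show ?thesis by simp
  qed
qed

lemma mult_prop:
  assumes "prime p"
  shows "witt_ghost p n (witt_mult_polys p) = witt_ghost p n (\<lambda>i. mvar (Inl i)) * witt_ghost p n (\<lambda>i. mvar (Inr i))"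
  unfolding witt_mult_polys_def
proof (rule witt_polys_prop[OF assms])
  fix n
  let ?X = "witt_ghost p (Suc n) (\<lambda>i. mvar (Inl i))" and ?Y = "witt_ghost p (Suc n) (\<lambda>i. mvar (Inr i))"
  let ?x = "mvar (Inl (Suc n)) :: (nat + nat) mpoly" and ?y = "mvar (Inr (Suc n)) :: (nat + nat) mpoly"
  let ?P = "of_nat p ^ Suc n :: (nat + nat) mpoly"
  have "?X * ?Y - phi p (witt_ghost p n (\<lambda>i. mvar (Inl i)) * witt_ghost p n (\<lambda>i. mvar (Inr i)))
      = ?X * ?Y - (?X - ?P * ?x) * (?Y - ?P * ?y)"
    by (simp add: rh_mult[OF phi_rh] phi_ghost_mvar[of p n Inl, simplified] phi_ghost_mvar[of p n Inr, simplified])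
  also have "\<dots> = ?P * (?x * ?Y + ?X * ?y - ?P * ?x * ?y)" by (simp add: algebra_simps)
  finally show "?P dvd (?X * ?Y - phi p (witt_ghost p n (\<lambda>i. mvar (Inl i)) * witt_ghost p n (\<lambda>i. mvar (Inr i))))"
    by simp
qed

lemma frob_prop:
  assumes "prime p"
  shows "witt_ghost p n (witt_frob_polys p) = witt_ghost p (Suc n) mvar"
  unfolding witt_frob_polys_def
proof (rule witt_polys_prop[OF assms])
  fix n
  have "witt_ghost p (Suc (Suc n)) mvar - phi p (witt_ghost p (Suc n) mvar) = of_nat p ^ Suc (Suc n) * mvar (Suc (Suc n))"
    using phi_ghost_mvar[of p "Suc n" "\<lambda>i. i"] by simp
  then show "of_nat p ^ Suc n dvd (witt_ghost p (Suc (Suc n)) mvar - phi p (witt_ghost p (Suc n) mvar))"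
    by (simp add: mult.assoc)
qed

definition witt_neg_polys :: "nat \<Rightarrow> nat \<Rightarrow> nat mpoly" where
  "witt_neg_polys p = witt_polys p (\<lambda>n. - witt_ghost p n mvar)"

definition witt_neg :: "nat \<Rightarrow> (nat \<Rightarrow> 'r::comm_ring_1) \<Rightarrow> nat \<Rightarrow> 'r" where
  "witt_neg p x = (\<lambda>n. mpoly_eval x (witt_neg_polys p n))"

lemma neg_prop:
  assumes "prime p"
  shows "witt_ghost p n (witt_neg_polys p) = - witt_ghost p n mvar"
  unfolding witt_neg_polys_def
proof (rule witt_polys_prop[OF assms])
  fix n
  have "- witt_ghost p (Suc n) mvar - phi p (- witt_ghost p n mvar) = - (of_nat p ^ Suc n * mvar (Suc n))"
    using phi_ghost_mvar[of p n "\<lambda>i. i"] by (simp add: rh_uminus[OF phi_rh])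
  then show "of_nat p ^ Suc n dvd (- witt_ghost p (Suc n) mvar - phi p (- witt_ghost p n mvar))"
    by simp
qed




definition witt_v :: "(nat \<Rightarrow> 'r::comm_ring_1) \<Rightarrow> nat \<Rightarrow> 'r" where
  "witt_v y = (\<lambda>i. case i of 0 \<Rightarrow> 0 | Suc j \<Rightarrow> y j)"

definition wpow :: "nat \<Rightarrow> nat \<Rightarrow> (nat \<Rightarrow> 'r::comm_ring_1) \<Rightarrow> nat \<Rightarrow> 'r" where
  "wpow p k x = ((witt_mult p x) ^^ k) witt_one"

context
  fixes p :: nat
  assumes pr: "prime p"
begin

lemma p_pos: "p > 0" using pr prime_gt_0_nat by blast

lemma ghost_add: "witt_ghost p n (witt_add p x y) = witt_ghost p n x + witt_ghost p n y"
proof -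
  have "witt_ghost p n (witt_add p x y) = mpoly_eval (case_sum x y) (witt_ghost p n (witt_add_polys p))"
    unfolding witt_add_def by (simp add: ghost_rh[OF eval_rh])
  also have "\<dots> = witt_ghost p n x + witt_ghost p n y"
    by (simp add: add_prop[OF pr] eval_add ghost_rh[OF eval_rh] eval_mvar)
  finally show ?thesis .
qed

lemma ghost_mult: "witt_ghost p n (witt_mult p x y) = witt_ghost p n x * witt_ghost p n y"
proof -
  have "witt_ghost p n (witt_mult p x y) = mpoly_eval (case_sum x y) (witt_ghost p n (witt_mult_polys p))"
    unfolding witt_mult_def by (simp add: ghost_rh[OF eval_rh])
  also have "\<dots> = witt_ghost p n x * witt_ghost p n y"
    by (simp add: mult_prop[OF pr] eval_mult ghost_rh[OF eval_rh] eval_mvar)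
  finally show ?thesis .
qed

lemma ghost_frob: "witt_ghost p n (witt_frob p x) = witt_ghost p (Suc n) x"
proof -
  have "witt_ghost p n (witt_frob p x) = mpoly_eval x (witt_ghost p n (witt_frob_polys p))"
    unfolding witt_frob_def by (simp add: ghost_rh[OF eval_rh])
  also have "\<dots> = witt_ghost p (Suc n) x"
    by (simp add: frob_prop[OF pr] ghost_rh[OF eval_rh] eval_mvar)
  finally show ?thesis .
qed

lemma ghost_neg: "witt_ghost p n (witt_neg p x) = - witt_ghost p n x"
proof -
  have "witt_ghost p n (witt_neg p x) = mpoly_eval x (witt_ghost p n (witt_neg_polys p))"
    unfolding witt_neg_def by (simp add: ghost_rh[OF eval_rh])
  also have "\<dots> = - witt_ghost p n x"
    by (simp add: neg_prop[OF pr] eval_uminus ghost_rh[OF eval_rh] eval_mvar)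
  finally show ?thesis .
qed

lemma ghost_zero: "witt_ghost p n (witt_zero :: nat \<Rightarrow> 'r::comm_ring_1) = 0"
  unfolding witt_ghost_def witt_zero_def using p_pos by (simp add: power_0_left)

lemma ghost_one: "witt_ghost p n (witt_one :: nat \<Rightarrow> 'r::comm_ring_1) = 1"
proof -
  have "\<And>i. (of_nat p ^ i * (witt_one i :: 'r) ^ (p ^ (n - i))) = (if i = 0 then 1 else 0)"
    unfolding witt_one_def using p_pos by (simp add: power_0_left)
  then show ?thesis unfolding witt_ghost_def by simp
qed

lemma nsmul_Suc: "witt_nsmul p (Suc k) x = witt_add p x (witt_nsmul p k x)"
  by (simp add: witt_nsmul_def)

lemma nsmul_0: "witt_nsmul p 0 x = witt_zero"
  by (simp add: witt_nsmul_def)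

lemma ghost_nsmul: "witt_ghost p n (witt_nsmul p k x) = of_nat k * witt_ghost p n x"
  by (induction k) (simp_all add: nsmul_Suc nsmul_0 ghost_add ghost_zero algebra_simps)

lemma ghost_v_0: "witt_ghost p 0 (witt_v y) = 0"
  by (simp add: ghost_0 witt_v_def)

lemma ghost_v_Suc: "witt_ghost p (Suc n) (witt_v y) = of_nat p * witt_ghost p n y"
proof -
  have "witt_ghost p (Suc n) (witt_v y) = (\<Sum>i\<le>Suc n. of_nat p ^ i * witt_v y i ^ (p ^ (Suc n - i)))"
    by (simp add: witt_ghost_def)
  also have "\<dots> = (\<Sum>i\<le>n. of_nat p ^ Suc i * y i ^ (p ^ (n - i))) + of_nat p ^ 0 * witt_v y 0 ^ (p ^ (Suc n - 0))"
    by (subst sum.atMost_Suc_shift) (simp add: witt_v_def)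
  also have "\<dots> = of_nat p * witt_ghost p n y"
    using p_pos by (simp add: witt_ghost_def witt_v_def sum_distrib_left mult.assoc power_0_left)
  finally show ?thesis .
qed

lemma ghost_wpow: "witt_ghost p n (wpow p k x) = witt_ghost p n x ^ k"
  by (induction k) (simp_all add: wpow_def ghost_one ghost_mult)

lemma wpow_Suc: "wpow p (Suc k) x = witt_mult p x (wpow p k x)"
  by (simp add: wpow_def)

lemma wpow_0: "wpow p 0 x = witt_one"
  by (simp add: wpow_def)

lemma comp_case_sum: "(g \<circ> case_sum x y) = case_sum (\<lambda>n. g (x n)) (\<lambda>n. g (y n))"
  by (rule ext) (simp split: sum.split)

lemma nat_add: "ring_hom_on g \<Longrightarrow> witt_map g (witt_add p x y) = witt_add p (witt_map g x) (witt_map g y)"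
  unfolding witt_map_def witt_add_def by (simp add: eval_nat comp_case_sum)

lemma nat_mult: "ring_hom_on g \<Longrightarrow> witt_map g (witt_mult p x y) = witt_mult p (witt_map g x) (witt_map g y)"
  unfolding witt_map_def witt_mult_def by (simp add: eval_nat comp_case_sum)

lemma nat_frob: "ring_hom_on g \<Longrightarrow> witt_map g (witt_frob p x) = witt_frob p (witt_map g x)"
  unfolding witt_map_def witt_frob_def by (simp add: eval_nat comp_def)

lemma nat_neg: "ring_hom_on g \<Longrightarrow> witt_map g (witt_neg p x) = witt_neg p (witt_map g x)"
  unfolding witt_map_def witt_neg_def by (simp add: eval_nat comp_def)

lemma nat_zero: "ring_hom_on g \<Longrightarrow> witt_map g witt_zero = witt_zero"
  unfolding witt_map_def witt_zero_def by (simp add: rh_zero)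

lemma nat_one: "ring_hom_on g \<Longrightarrow> witt_map g witt_one = witt_one"
  unfolding witt_map_def witt_one_def by (simp add: rh_zero rh_one fun_eq_iff)

lemma nat_nsmul: "ring_hom_on g \<Longrightarrow> witt_map g (witt_nsmul p k x) = witt_nsmul p k (witt_map g x)"
  by (induction k) (simp_all add: nsmul_Suc nsmul_0 nat_add nat_zero)

lemma nat_wpow: "ring_hom_on g \<Longrightarrow> witt_map g (wpow p k x) = wpow p k (witt_map g x)"
  by (induction k) (simp_all add: wpow_Suc wpow_0 nat_mult nat_one)

lemma nat_v: "ring_hom_on g \<Longrightarrow> witt_map g (witt_v y) = witt_v (witt_map g y)"
  unfolding witt_map_def witt_v_def by (simp add: rh_zero fun_eq_iff split: nat.split)

lemma nat_f1: "witt_map g (witt_f1 y) = witt_f1 (witt_map g y)"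
  unfolding witt_map_def witt_f1_def by simp

lemmas nat_all = nat_add nat_mult nat_frob nat_neg nat_zero nat_one nat_nsmul nat_wpow nat_v

end

section \<open>Universal ring\<close>

type_synonym uring = "(nat \<times> nat) mpoly"

definition UV :: "nat \<Rightarrow> nat \<Rightarrow> uring" where
  "UV j = (\<lambda>i. mvar (j, i))"

definition uev :: "(nat \<Rightarrow> nat \<Rightarrow> 'r::comm_ring_1) \<Rightarrow> uring \<Rightarrow> 'r" where
  "uev xs = mpoly_eval (\<lambda>(j, i). xs j i)"

lemma uev_rh: "ring_hom_on (uev xs)" by (simp add: uev_def eval_rh)

lemma wm_UV: "witt_map (uev xs) (UV j) = xs j"
  by (simp add: witt_map_def uev_def UV_def eval_mvar)

lemma uev_mvar: "uev xs (mvar (j, i)) = xs j i"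
  by (simp add: uev_def eval_mvar)

lemma U_tf: "prime p \<Longrightarrow> \<forall>a::uring. of_nat p * a = 0 \<longrightarrow> a = 0"
  by (rule mpoly_tf) auto




context
  fixes p :: nat
  assumes pr: "prime p"
begin

lemmas gh = ghost_add[OF pr] ghost_mult[OF pr] ghost_frob[OF pr] ghost_neg[OF pr] ghost_zero[OF pr]
  ghost_one[OF pr] ghost_nsmul[OF pr] ghost_v_Suc[OF pr] ghost_wpow[OF pr]
lemmas nt = nat_all[OF pr uev_rh] wm_UV

lemma nsmul_add: "witt_nsmul p k (witt_add p a b) = witt_add p (witt_nsmul p k a) (witt_nsmul p k b)"
proof -
  define xs where "xs = (\<lambda>j::nat. if j = 0 then a else b)"
  have U: "witt_nsmul p k (witt_add p (UV 0) (UV 1)) = witt_add p (witt_nsmul p k (UV 0)) (witt_nsmul p k (UV 1))"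
    by (rule ghost_inj[OF U_tf[OF pr]]) (simp add: gh algebra_simps)
  have "witt_map (uev xs) (witt_nsmul p k (witt_add p (UV 0) (UV 1))) = witt_map (uev xs) (witt_add p (witt_nsmul p k (UV 0)) (witt_nsmul p k (UV 1)))"
    using U by simp
  then show ?thesis by (simp add: nt xs_def)
qed

lemma nsmul_mult_r: "witt_nsmul p k (witt_mult p a b) = witt_mult p a (witt_nsmul p k b)"
proof -
  define xs where "xs = (\<lambda>j::nat. if j = 0 then a else b)"
  have U: "witt_nsmul p k (witt_mult p (UV 0) (UV 1)) = witt_mult p (UV 0) (witt_nsmul p k (UV 1))"
    by (rule ghost_inj[OF U_tf[OF pr]]) (simp add: gh algebra_simps)
  have "witt_map (uev xs) (witt_nsmul p k (witt_mult p (UV 0) (UV 1))) = witt_map (uev xs) (witt_mult p (UV 0) (witt_nsmul p k (UV 1)))"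
    using U by simp
  then show ?thesis by (simp add: nt xs_def)
qed

lemma nsmul_mult_l: "witt_nsmul p k (witt_mult p a b) = witt_mult p (witt_nsmul p k a) b"
proof -
  define xs where "xs = (\<lambda>j::nat. if j = 0 then a else b)"
  have U: "witt_nsmul p k (witt_mult p (UV 0) (UV 1)) = witt_mult p (witt_nsmul p k (UV 0)) (UV 1)"
    by (rule ghost_inj[OF U_tf[OF pr]]) (simp add: gh algebra_simps)
  have "witt_map (uev xs) (witt_nsmul p k (witt_mult p (UV 0) (UV 1))) = witt_map (uev xs) (witt_mult p (witt_nsmul p k (UV 0)) (UV 1))"
    using U by simp
  then show ?thesis by (simp add: nt xs_def)
qed

lemma nsmul_nsmul: "witt_nsmul p a (witt_nsmul p b x) = witt_nsmul p (a * b) x"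
proof -
  define xs where "xs = (\<lambda>j::nat. x)"
  have U: "witt_nsmul p a (witt_nsmul p b (UV 0)) = witt_nsmul p (a * b) (UV 0)"
    by (rule ghost_inj[OF U_tf[OF pr]]) (simp add: gh algebra_simps)
  have "witt_map (uev xs) (witt_nsmul p a (witt_nsmul p b (UV 0))) = witt_map (uev xs) (witt_nsmul p (a * b) (UV 0))"
    using U by simp
  then show ?thesis by (simp add: nt xs_def)
qed

lemma nsmul_zero: "witt_nsmul p k (witt_zero :: nat \<Rightarrow> 'r::comm_ring_1) = witt_zero"
proof -
  define xs where "xs = (\<lambda>j::nat. witt_zero :: nat \<Rightarrow> 'r)"
  have U: "witt_nsmul p k (witt_zero :: nat \<Rightarrow> uring) = witt_zero"
    by (rule ghost_inj[OF U_tf[OF pr]]) (simp add: gh algebra_simps)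
  have "witt_map (uev xs) (witt_nsmul p k (witt_zero :: nat \<Rightarrow> uring)) = witt_map (uev xs) witt_zero"
    using U by simp
  then show ?thesis by (simp add: nt xs_def)
qed

lemma add_neg_r: "witt_add p (witt_add p a (witt_neg p b)) b = a"
proof -
  define xs where "xs = (\<lambda>j::nat. if j = 0 then a else b)"
  have U: "witt_add p (witt_add p (UV 0) (witt_neg p (UV 1))) (UV 1) = UV 0"
    by (rule ghost_inj[OF U_tf[OF pr]]) (simp add: gh algebra_simps)
  have "witt_map (uev xs) (witt_add p (witt_add p (UV 0) (witt_neg p (UV 1))) (UV 1)) = witt_map (uev xs) (UV 0)"
    using U by simp
  then show ?thesis by (simp add: nt xs_def)
qed

lemma add_neg: "witt_add p b (witt_neg p b) = witt_zero"
proof -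
  define xs where "xs = (\<lambda>j::nat. b)"
  have U: "witt_add p (UV 0) (witt_neg p (UV 0)) = witt_zero"
    by (rule ghost_inj[OF U_tf[OF pr]]) (simp add: gh algebra_simps)
  have "witt_map (uev xs) (witt_add p (UV 0) (witt_neg p (UV 0))) = witt_map (uev xs) witt_zero"
    using U by simp
  then show ?thesis by (simp add: nt xs_def)
qed

lemma zero_add: "witt_add p witt_zero b = b"
proof -
  define xs where "xs = (\<lambda>j::nat. b)"
  have U: "witt_add p witt_zero (UV 0) = UV 0"
    by (rule ghost_inj[OF U_tf[OF pr]]) (simp add: gh algebra_simps)
  have "witt_map (uev xs) (witt_add p witt_zero (UV 0)) = witt_map (uev xs) (UV 0)"
    using U by simp
  then show ?thesis by (simp add: nt xs_def)
qed

lemma add_zero: "witt_add p b witt_zero = b"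
proof -
  define xs where "xs = (\<lambda>j::nat. b)"
  have U: "witt_add p (UV 0) witt_zero = UV 0"
    by (rule ghost_inj[OF U_tf[OF pr]]) (simp add: gh algebra_simps)
  have "witt_map (uev xs) (witt_add p (UV 0) witt_zero) = witt_map (uev xs) (UV 0)"
    using U by simp
  then show ?thesis by (simp add: nt xs_def)
qed

lemma mult_one: "witt_mult p b witt_one = b"
proof -
  define xs where "xs = (\<lambda>j::nat. b)"
  have U: "witt_mult p (UV 0) witt_one = UV 0"
    by (rule ghost_inj[OF U_tf[OF pr]]) (simp add: gh algebra_simps)
  have "witt_map (uev xs) (witt_mult p (UV 0) witt_one) = witt_map (uev xs) (UV 0)"
    using U by simp
  then show ?thesis by (simp add: nt xs_def)
qed

lemma frob_add: "witt_frob p (witt_add p a b) = witt_add p (witt_frob p a) (witt_frob p b)"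
proof -
  define xs where "xs = (\<lambda>j::nat. if j = 0 then a else b)"
  have U: "witt_frob p (witt_add p (UV 0) (UV 1)) = witt_add p (witt_frob p (UV 0)) (witt_frob p (UV 1))"
    by (rule ghost_inj[OF U_tf[OF pr]]) (simp add: gh algebra_simps)
  have "witt_map (uev xs) (witt_frob p (witt_add p (UV 0) (UV 1))) = witt_map (uev xs) (witt_add p (witt_frob p (UV 0)) (witt_frob p (UV 1)))"
    using U by simp
  then show ?thesis by (simp add: nt xs_def)
qed

lemma frob_zero: "witt_frob p (witt_zero :: nat \<Rightarrow> 'r::comm_ring_1) = witt_zero"
proof -
  define xs where "xs = (\<lambda>j::nat. witt_zero :: nat \<Rightarrow> 'r)"
  have U: "witt_frob p (witt_zero :: nat \<Rightarrow> uring) = witt_zero"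
    by (rule ghost_inj[OF U_tf[OF pr]]) (simp add: gh algebra_simps)
  have "witt_map (uev xs) (witt_frob p (witt_zero :: nat \<Rightarrow> uring)) = witt_map (uev xs) witt_zero"
    using U by simp
  then show ?thesis by (simp add: nt xs_def)
qed

lemma frob_v: "witt_frob p (witt_v y) = witt_nsmul p p y"
proof -
  define xs where "xs = (\<lambda>j::nat. y)"
  have U: "witt_frob p (witt_v (UV 0)) = witt_nsmul p p (UV 0)"
    by (rule ghost_inj[OF U_tf[OF pr]]) (simp add: gh algebra_simps)
  have "witt_map (uev xs) (witt_frob p (witt_v (UV 0))) = witt_map (uev xs) (witt_nsmul p p (UV 0))"
    using U by simp
  then show ?thesis by (simp add: nt xs_def)
qed

lemma frob_nsmul: "witt_frob p (witt_nsmul p k a) = witt_nsmul p k (witt_frob p a)"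
  by (induction k) (simp_all add: nsmul_Suc[OF pr] nsmul_0[OF pr] frob_add frob_zero)

lemma c0_add: "witt_add p a b 0 = a 0 + b 0"
  using ghost_add[OF pr, of 0 a b] by (simp add: ghost_0)
lemma c0_mult: "witt_mult p a b 0 = a 0 * b 0"
  using ghost_mult[OF pr, of 0 a b] by (simp add: ghost_0)
lemma c0_nsmul: "witt_nsmul p k a 0 = of_nat k * a 0"
  using ghost_nsmul[OF pr, of 0 k a] by (simp add: ghost_0)
lemma c0_wpow: "wpow p k a 0 = a 0 ^ k"
  using ghost_wpow[OF pr, of 0 k a] by (simp add: ghost_0)
lemma c0_frob: "witt_frob p a 0 = a 0 ^ p + of_nat p * a 1"
  using ghost_frob[OF pr, of 0 a] by (simp add: ghost_0 witt_ghost_def)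

section \<open>Locality of multiplication\<close>

lemma mult_loc:
  assumes ag: "\<forall>i\<le>k. y i = y' i"
  shows "witt_mult p x y k = witt_mult p x y' k"
proof -
  define xs where "xs = (\<lambda>j::nat. if j = 0 then x else if j = 1 then y else y')"
  define Y2 where "Y2 = (\<lambda>i. if i \<le> k then UV 1 i else UV 2 i)"
  have g: "\<And>j. j \<le> k \<Longrightarrow> witt_ghost p j (UV 1) = witt_ghost p j Y2"
    by (rule ghost_cong) (simp add: Y2_def)
  have "witt_mult p (UV 0) (UV 1) k = witt_mult p (UV 0) Y2 k"
    by (rule ghost_trunc_inj[OF U_tf[OF pr], where N=k and k=k]) (use g in \<open>simp_all add: gh\<close>)
  then have "witt_map (uev xs) (witt_mult p (UV 0) (UV 1)) k = witt_map (uev xs) (witt_mult p (UV 0) Y2) k"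
    by (simp add: witt_map_def)
  then have "witt_mult p x y k = witt_mult p x (witt_map (uev xs) Y2) k"
    by (simp add: nt xs_def)
  moreover have "witt_map (uev xs) Y2 = y'"
    using ag by (auto simp: witt_map_def Y2_def UV_def uev_mvar xs_def)
  ultimately show ?thesis by simp
qed

lemma mult_upd:
  "witt_mult p x (y(n := y n + t)) n = witt_mult p x y n + witt_ghost p n x * t"
proof -
  define xs where "xs = (\<lambda>j::nat. if j = 0 then x else if j = 1 then y else (\<lambda>_. t))"
  define T where "T = (mvar (2, 0) :: uring)"
  define Y' where "Y' = (UV 1)(n := UV 1 n + T)"
  define Z where "Z = witt_mult p (UV 0) Y'"
  define Z' where "Z' = witt_mult p (UV 0) (UV 1)"
  have low: "\<And>i. i < n \<Longrightarrow> Z i = Z' i"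
  proof -
    fix i assume i: "i < n"
    show "Z i = Z' i"
    proof (rule ghost_trunc_inj[OF U_tf[OF pr], where N="n - 1" and k=i])
      fix j assume j: "j \<le> n - 1"
      have "witt_ghost p j Y' = witt_ghost p j (UV 1)"
        by (rule ghost_cong) (use j i in \<open>auto simp: Y'_def\<close>)
      then show "witt_ghost p j Z = witt_ghost p j Z'" by (simp add: Z_def Z'_def gh)
    next
      show "i \<le> n - 1" using i by simp
    qed
  qed
  have gY: "witt_ghost p n Y' = witt_ghost p n (UV 1) + of_nat p ^ n * T"
  proof -
    have "(\<Sum>i<n. of_nat p ^ i * Y' i ^ (p ^ (n - i))) = (\<Sum>i<n. of_nat p ^ i * UV 1 i ^ (p ^ (n - i)))"
      by (rule sum.cong) (auto simp: Y'_def)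
    then show ?thesis by (simp add: ghost_split[of p n] Y'_def algebra_simps)
  qed
  have sl: "(\<Sum>i<n. of_nat p ^ i * Z i ^ (p ^ (n - i))) = (\<Sum>i<n. of_nat p ^ i * Z' i ^ (p ^ (n - i)))"
    by (rule sum.cong) (auto simp: low)
  have "witt_ghost p n Z = witt_ghost p n Z' + witt_ghost p n (UV 0) * (of_nat p ^ n * T)"
    by (simp add: Z_def Z'_def gh gY algebra_simps)
  then have "of_nat p ^ n * Z n = of_nat p ^ n * (Z' n + witt_ghost p n (UV 0) * T)"
    unfolding ghost_split[of p n Z] ghost_split[of p n Z'] sl by (simp add: algebra_simps)
  then have U: "Z n = Z' n + witt_ghost p n (UV 0) * T" by (rule tf_cancel[OF U_tf[OF pr]])
  have "uev xs (Z n) = uev xs (Z' n + witt_ghost p n (UV 0) * T)" using U by simp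
  moreover have "uev xs (Z n) = witt_mult p x (y(n := y n + t)) n"
  proof -
    have wx: "witt_map (uev xs) (UV 0) = x" by (simp add: wm_UV xs_def)
    have wy: "witt_map (uev xs) Y' = y(n := y n + t)"
      by (auto simp: witt_map_def Y'_def UV_def T_def uev_mvar xs_def rh_add[OF uev_rh])
    have "uev xs (Z n) = witt_map (uev xs) Z n" by (simp add: witt_map_def)
    also have "\<dots> = witt_mult p (witt_map (uev xs) (UV 0)) (witt_map (uev xs) Y') n"
      by (simp add: Z_def nat_mult[OF pr uev_rh])
    also have "\<dots> = witt_mult p x (y(n := y n + t)) n" by (simp only: wx wy)
    finally show ?thesis .
  qed
  moreover have "uev xs (Z' n) = witt_mult p x y n"
  proof -
    have "uev xs (Z' n) = witt_map (uev xs) Z' n" by (simp add: witt_map_def)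
    also have "\<dots> = witt_mult p (witt_map (uev xs) (UV 0)) (witt_map (uev xs) (UV 1)) n"
      by (simp add: Z'_def nat_mult[OF pr uev_rh])
    also have "\<dots> = witt_mult p x y n" by (simp add: wm_UV xs_def)
    finally show ?thesis .
  qed
  moreover have "uev xs (witt_ghost p n (UV 0) * T) = witt_ghost p n x * t"
    by (simp add: rh_mult[OF uev_rh] ghost_rh[OF uev_rh] T_def uev_mvar UV_def xs_def)
  ultimately show ?thesis by (simp add: rh_add[OF uev_rh])
qed

end




lemma unit_mult: "(a::'a::comm_ring_1) dvd 1 \<Longrightarrow> b dvd 1 \<Longrightarrow> a * b dvd 1"
  using mult_dvd_mono[of a 1 b 1] by simp

lemma unit_pow: "(a::'a::comm_ring_1) dvd 1 \<Longrightarrow> a ^ n dvd 1"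
  by (induction n) (simp_all add: unit_mult)

definition rinv :: "'a::comm_ring_1 \<Rightarrow> 'a" where "rinv a = (SOME b. a * b = 1)"

lemma rinv: "(a::'a::comm_ring_1) dvd 1 \<Longrightarrow> a * rinv a = 1"
  unfolding rinv_def by (rule someI_ex) (auto simp: dvd_def intro: sym)

context
  fixes p :: nat
  assumes pr: "prime p"
begin

lemma ghost_unit:
  fixes x :: "nat \<Rightarrow> 'r::comm_ring_1"
  assumes rad: "\<forall>r::'r. (1 - of_nat p * r) dvd 1" and u0: "x 0 dvd 1"
  shows "witt_ghost p n x dvd 1"
proof -
  have "\<exists>s. witt_ghost p n x = x 0 ^ (p ^ n) + of_nat p * s"
  proof (cases n)
    case 0 then show ?thesis by (intro exI[of _ 0]) (simp add: ghost_0)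
  next
    case (Suc m)
    have "witt_ghost p n x = of_nat p ^ 0 * x 0 ^ (p ^ (Suc m - 0)) + (\<Sum>i\<le>m. of_nat p ^ Suc i * x (Suc i) ^ (p ^ (Suc m - Suc i)))"
      unfolding witt_ghost_def Suc by (rule sum.atMost_Suc_shift)
    also have "\<dots> = x 0 ^ (p ^ n) + of_nat p * (\<Sum>i\<le>m. of_nat p ^ i * x (Suc i) ^ (p ^ (m - i)))"
      by (simp add: Suc sum_distrib_left mult.assoc)
    finally show ?thesis by blast
  qed
  then obtain s where s: "witt_ghost p n x = x 0 ^ (p ^ n) + of_nat p * s" by blast
  have a: "x 0 ^ (p ^ n) dvd 1" using u0 by (rule unit_pow)
  define v where "v = rinv (x 0 ^ (p ^ n))"
  have av: "x 0 ^ (p ^ n) * v = 1" using rinv[OF a] by (simp add: v_def)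
  have "x 0 ^ (p ^ n) * (1 - of_nat p * (- (s * v))) = x 0 ^ (p ^ n) + of_nat p * s * (x 0 ^ (p ^ n) * v)"
    by (simp add: algebra_simps)
  then have "witt_ghost p n x = x 0 ^ (p ^ n) * (1 - of_nat p * (- (s * v)))"
    using s av by simp
  moreover have "(1 - of_nat p * (- (s * v))) dvd 1" using rad by blast
  ultimately show ?thesis using a by (simp add: unit_mult)
qed

lemma unit_crit:
  fixes x :: "nat \<Rightarrow> 'r::comm_ring_1"
  assumes rad: "\<forall>r::'r. (1 - of_nat p * r) dvd 1" and u0: "x 0 dvd 1"
  shows "witt_unit p x"
proof -
  define t where "t = (\<lambda>n (W :: nat \<Rightarrow> 'r). - witt_mult p x W (Suc n) * rinv (witt_ghost p (Suc n) x))"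
  define V where "V = rec_nat (\<lambda>i. if i = 0 then rinv (x 0) else 0) (\<lambda>n W. W(Suc n := W (Suc n) + t n W))"
  have V0: "V 0 = (\<lambda>i. if i = 0 then rinv (x 0) else 0)" by (simp add: V_def)
  have VS: "\<And>n. V (Suc n) = (V n)(Suc n := V n (Suc n) + t n (V n))" by (simp add: V_def)
  have step: "\<And>m i. i \<le> m \<Longrightarrow> V (Suc m) i = V m i" by (simp add: VS)
  have P1: "\<And>n m i. i \<le> n \<Longrightarrow> n \<le> m \<Longrightarrow> V m i = V n i"
  proof -
    fix n m i :: nat assume i: "i \<le> n" and nm: "n \<le> m"
    show "V m i = V n i" using nm
    proof (induction m rule: dec_induct)
      case base then show ?case by simp
    next
      case (step m) then show ?case using i \<open>\<And>m i. i \<le> m \<Longrightarrow> V (Suc m) i = V m i\<close>[of i m] by simp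
    qed
  qed
  have P2: "\<And>n k. k \<le> n \<Longrightarrow> witt_mult p x (V n) k = witt_one k"
  proof -
    fix n show "\<And>k. k \<le> n \<Longrightarrow> witt_mult p x (V n) k = witt_one k"
    proof (induction n)
      case 0
      then have "k = 0" by simp
      then show ?case using rinv[OF u0] by (simp add: c0_mult[OF pr] V0 witt_one_def)
    next
      case (Suc n k)
      show ?case
      proof (cases "k \<le> n")
        case True
        have "witt_mult p x (V (Suc n)) k = witt_mult p x (V n) k"
          by (rule mult_loc[OF pr]) (use True in \<open>auto simp: step\<close>)
        then show ?thesis using Suc.IH True by simp
      next
        case False
        then have k: "k = Suc n" using Suc.prems by simp
        have w: "witt_ghost p (Suc n) x dvd 1" by (rule ghost_unit[where x=x, OF rad u0])
        have "witt_mult p x (V (Suc n)) (Suc n) = witt_mult p x (V n) (Suc n) + witt_ghost p (Suc n) x * t n (V n)"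
          unfolding VS by (rule mult_upd[OF pr])
        also have "\<dots> = 0"
        proof -
          have "witt_ghost p (Suc n) x * t n (V n) = - witt_mult p x (V n) (Suc n) * (witt_ghost p (Suc n) x * rinv (witt_ghost p (Suc n) x))"
            by (simp add: t_def algebra_simps)
          then show ?thesis using rinv[OF w] by simp
        qed
        finally show ?thesis by (simp add: k witt_one_def)
      qed
    qed
  qed
  define y where "y = (\<lambda>i. V i i)"
  have "witt_mult p x y = witt_one"
  proof
    fix k
    have "witt_mult p x y k = witt_mult p x (V k) k"
      by (rule mult_loc[OF pr]) (auto simp: y_def intro: P1[symmetric])
    then show "witt_mult p x y k = witt_one k" using P2[of k k] by simp
  qed
  then show ?thesis unfolding witt_unit_def by blast
qed

lemma nsmul_cancel:
  fixes a b :: "nat \<Rightarrow> 'r::comm_ring_1"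
  assumes tfW: "\<forall>x::nat \<Rightarrow> 'r. witt_nsmul p p x = witt_zero \<longrightarrow> x = witt_zero"
    and eq: "witt_nsmul p p a = witt_nsmul p p b"
  shows "a = b"
proof -
  define d where "d = witt_add p a (witt_neg p b)"
  have "witt_nsmul p p d = witt_add p (witt_nsmul p p b) (witt_nsmul p p (witt_neg p b))"
    by (simp add: d_def nsmul_add[OF pr] eq)
  also have "\<dots> = witt_zero" by (simp add: nsmul_add[OF pr, symmetric] add_neg[OF pr] nsmul_zero[OF pr])
  finally have "d = witt_zero" using tfW by blast
  then show ?thesis using add_neg_r[OF pr, of a b] zero_add[OF pr, of b] by (simp add: d_def)
qed

lemma wpow_nsmul: "wpow p k (witt_nsmul p p u) = witt_nsmul p (p ^ k) (wpow p k u)"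
proof (induction k)
  case 0 then show ?case by (simp add: wpow_0[OF pr] nsmul_Suc[OF pr] nsmul_0[OF pr] add_zero[OF pr])
next
  case (Suc k)
  have "wpow p (Suc k) (witt_nsmul p p u) = witt_mult p (witt_nsmul p p u) (witt_nsmul p (p ^ k) (wpow p k u))"
    by (simp add: wpow_Suc[OF pr] Suc)
  also have "\<dots> = witt_nsmul p p (witt_nsmul p (p ^ k) (witt_mult p u (wpow p k u)))"
    by (simp add: nsmul_mult_l[OF pr, symmetric] nsmul_mult_r[OF pr, symmetric] nsmul_nsmul[OF pr] mult.commute)
  also have "\<dots> = witt_nsmul p (p ^ Suc k) (wpow p (Suc k) u)"
    by (simp add: nsmul_nsmul[OF pr] wpow_Suc[OF pr])
  finally show ?case .
qed

end




lemma iter_comm: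
  assumes "\<forall>a. \<sigma>' (\<alpha> a) = \<alpha> (\<sigma> a)"
  shows "\<alpha> ((\<sigma> ^^ n) a) = (\<sigma>' ^^ n) (\<alpha> a)"
  by (induction n) (simp_all add: assms[rule_format, symmetric])

lemma functorial:
  fixes \<delta> :: "'a::comm_ring_1 \<Rightarrow> nat \<Rightarrow> 'a" and \<delta>' :: "'b::comm_ring_1 \<Rightarrow> nat \<Rightarrow> 'b"
  assumes pr: "prime p" and tf': "\<forall>a::'b. of_nat p * a = 0 \<longrightarrow> a = 0"
    and hd: "witt_delta p \<sigma> \<delta>" and hd': "witt_delta p \<sigma>' \<delta>'"
    and h\<alpha>: "ring_hom_on \<alpha>" and comm: "\<forall>a. \<sigma>' (\<alpha> a) = \<alpha> (\<sigma> a)"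
  shows "witt_map \<alpha> (\<delta> a) = \<delta>' (\<alpha> a)"
proof (rule ghost_inj[OF tf'])
  fix n
  have "witt_ghost p n (witt_map \<alpha> (\<delta> a)) = \<alpha> (witt_ghost p n (\<delta> a))"
    by (simp add: ghost_rh[OF h\<alpha>] witt_map_def)
  also have "\<dots> = \<alpha> ((\<sigma> ^^ n) a)" using hd by (simp add: witt_delta_def)
  also have "\<dots> = (\<sigma>' ^^ n) (\<alpha> a)" by (rule iter_comm[OF comm])
  also have "\<dots> = witt_ghost p n (\<delta>' (\<alpha> a))" using hd' by (simp add: witt_delta_def)
  finally show "witt_ghost p n (witt_map \<alpha> (\<delta> a)) = witt_ghost p n (\<delta>' (\<alpha> a))" .
qed

theorem proposition6p3:
  fixes p :: nat
    and I :: "'a::comm_ring_1 set" and \<pi> :: "'a \<Rightarrow> 'r::comm_ring_1"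
    and \<sigma> \<sigma>1 :: "'a \<Rightarrow> 'a" and \<delta> :: "'a \<Rightarrow> nat \<Rightarrow> 'a"
  assumes "prime p"
    and "kappa_frame p I \<pi> \<sigma> \<sigma>1"
    and "witt_delta p \<sigma> \<delta>"
  shows "(\<exists>u. witt_frame_uhom p I \<sigma> \<sigma>1 u (\<lambda>a. witt_map \<pi> (\<delta> a))
               \<and> (\<forall>a. witt_map \<pi> (\<delta> a) 0 = \<pi> a))
    \<and> (\<forall>(I' :: 'b::comm_ring_1 set) (\<pi>' :: 'b \<Rightarrow> 's::comm_ring_1) \<sigma>' \<sigma>1' \<delta>' v \<alpha>.
          kappa_frame p I' \<pi>' \<sigma>' \<sigma>1' \<and> witt_delta p \<sigma>' \<delta>' \<and>
          frame_uhom I \<sigma> \<sigma>1 I' \<sigma>' \<sigma>1' v \<alpha> \<longrightarrow>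
          (\<forall>a. witt_map \<pi>' (witt_map \<alpha> (\<delta> a)) = witt_map \<pi>' (\<delta>' (\<alpha> a))))"
proof
  note pr = assms(1)
  have pp: "p > 0" using pr prime_gt_0_nat by blast
  have kf: "frame p I \<pi> \<sigma> \<sigma>1" and tfS: "\<forall>a::'a. of_nat p * a = 0 \<longrightarrow> a = 0"
    and tfW: "\<forall>x::nat \<Rightarrow> 'r. witt_nsmul p p x = witt_zero \<longrightarrow> x = witt_zero"
    and th: "\<exists>\<theta>. (\<forall>a\<in>I. \<sigma> a = \<theta> * \<sigma>1 a) \<and> (\<exists>e. e dvd 1 \<and> \<sigma> \<theta> - \<theta> ^ p = of_nat p * e)"
    using assms(2) unfolding kappa_frame_def by blast+
  have h\<pi>: "ring_hom_on \<pi>" and sj: "surj \<pi>" and Idef: "I = {a. \<pi> a = 0}" and h\<sigma>: "ring_hom_on \<sigma>"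
    and jac: "\<forall>a\<in>I. \<forall>s. a + of_nat p * s \<in> jacobson_radical"
    and gen: "\<forall>x. \<exists>(k::nat) c b. (\<forall>i<k. b i \<in> I) \<and> x = (\<Sum>i<k. c i * \<sigma>1 (b i))"
    using kf unfolding frame_def by blast+
  obtain \<theta> e where th1: "\<forall>a\<in>I. \<sigma> a = \<theta> * \<sigma>1 a" and eu: "e dvd 1" and the: "\<sigma> \<theta> - \<theta> ^ p = of_nat p * e"
    using th by blast
  have dadd: "\<And>a b. \<delta> (a + b) = witt_add p (\<delta> a) (\<delta> b)"
    and dmult: "\<And>a b. \<delta> (a * b) = witt_mult p (\<delta> a) (\<delta> b)"
    and d1: "\<delta> 1 = witt_one"
    and dgh: "\<And>a n. witt_ghost p n (\<delta> a) = (\<sigma> ^^ n) a"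
    using assms(3) unfolding witt_delta_def by blast+
  define \<kappa> where "\<kappa> = (\<lambda>a. witt_map \<pi> (\<delta> a))"
  have Kadd: "\<And>a b. \<kappa> (a + b) = witt_add p (\<kappa> a) (\<kappa> b)"
    by (simp add: \<kappa>_def dadd nat_add[OF pr h\<pi>])
  have Kmult: "\<And>a b. \<kappa> (a * b) = witt_mult p (\<kappa> a) (\<kappa> b)"
    by (simp add: \<kappa>_def dmult nat_mult[OF pr h\<pi>])
  have Kone: "\<kappa> 1 = witt_one"
    by (simp add: \<kappa>_def d1 nat_one[OF pr h\<pi>])
  have s0: "\<And>n. (\<sigma> ^^ n) 0 = 0" by (induct_tac n) (simp_all add: rh_zero[OF h\<sigma>])
  have d0: "\<delta> 0 = witt_zero"
    by (rule ghost_inj[OF tfS]) (simp add: dgh s0 ghost_zero[OF pr])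
  have Kzero: "\<kappa> 0 = witt_zero" by (simp add: \<kappa>_def d0 nat_zero[OF pr h\<pi>])
  have dc0: "\<And>a. \<delta> a 0 = a"
  proof -
    fix a show "\<delta> a 0 = a" using dgh[where a=a and n=0] by (simp add: ghost_0)
  qed
  have K0: "\<And>a. \<kappa> a 0 = \<pi> a" by (simp add: \<kappa>_def witt_map_def dc0)
  have dfrob: "\<And>a. witt_frob p (\<delta> a) = \<delta> (\<sigma> a)"
    by (rule ghost_inj[OF tfS]) (simp add: ghost_frob[OF pr] dgh funpow_swap1)
  have Kfrob: "\<And>a. witt_frob p (\<kappa> a) = \<kappa> (\<sigma> a)"
    by (simp add: \<kappa>_def nat_frob[OF pr h\<pi>, symmetric] dfrob)
  have Knat: "\<And>k a. \<kappa> (of_nat k * a) = witt_nsmul p k (\<kappa> a)"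
  proof -
    fix k a show "\<kappa> (of_nat k * a) = witt_nsmul p k (\<kappa> a)"
      by (induction k) (simp_all add: Kzero nsmul_0[OF pr] nsmul_Suc[OF pr] Kadd distrib_right)
  qed
  have Kpow: "\<And>k a. \<kappa> (a ^ k) = wpow p k (\<kappa> a)"
  proof -
    fix k a show "\<kappa> (a ^ k) = wpow p k (\<kappa> a)"
      by (induction k) (simp_all add: Kone wpow_0[OF pr] wpow_Suc[OF pr] Kmult)
  qed
  have KI: "\<And>a. a \<in> I \<Longrightarrow> \<kappa> a 0 = 0" using Idef K0 by simp
  have vf1: "\<And>a. a \<in> I \<Longrightarrow> witt_v (witt_f1 (\<kappa> a)) = \<kappa> a"
    by (rule ext) (simp add: witt_v_def witt_f1_def KI split: nat.split)
  have Ny: "\<And>a. a \<in> I \<Longrightarrow> witt_nsmul p p (witt_f1 (\<kappa> a)) = witt_mult p (\<kappa> \<theta>) (\<kappa> (\<sigma>1 a))"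
  proof -
    fix a assume a: "a \<in> I"
    have "witt_nsmul p p (witt_f1 (\<kappa> a)) = witt_frob p (witt_v (witt_f1 (\<kappa> a)))"
      by (simp add: frob_v[OF pr])
    also have "\<dots> = \<kappa> (\<sigma> a)" using a by (simp add: vf1 Kfrob)
    also have "\<dots> = witt_mult p (\<kappa> \<theta>) (\<kappa> (\<sigma>1 a))" using a th1 by (simp add: Kmult)
    finally show "witt_nsmul p p (witt_f1 (\<kappa> a)) = witt_mult p (\<kappa> \<theta>) (\<kappa> (\<sigma>1 a))" .
  qed
  have sumclaim: "\<And>(k::nat) c b. (\<forall>i<k. b i \<in> I) \<Longrightarrow> \<exists>w. witt_nsmul p p w = \<kappa> (\<theta> * (\<Sum>i<k. c i * \<sigma>1 (b i)))"
  proof -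
    fix k :: nat and c b
    show "(\<forall>i<k. b i \<in> I) \<Longrightarrow> \<exists>w. witt_nsmul p p w = \<kappa> (\<theta> * (\<Sum>i<k. c i * \<sigma>1 (b i)))"
    proof (induction k)
      case 0
      show ?case by (rule exI[of _ witt_zero]) (simp add: nsmul_zero[OF pr] Kzero)
    next
      case (Suc k)
      then obtain w where w: "witt_nsmul p p w = \<kappa> (\<theta> * (\<Sum>i<k. c i * \<sigma>1 (b i)))" by auto
      have bk: "b k \<in> I" using Suc.prems by simp
      define w' where "w' = witt_add p w (witt_mult p (\<kappa> (c k)) (witt_f1 (\<kappa> (b k))))"
      have "witt_nsmul p p w' = witt_add p (\<kappa> (\<theta> * (\<Sum>i<k. c i * \<sigma>1 (b i))))
              (witt_mult p (\<kappa> (c k)) (witt_mult p (\<kappa> \<theta>) (\<kappa> (\<sigma>1 (b k)))))"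
        by (simp add: w'_def nsmul_add[OF pr] nsmul_mult_r[OF pr] w Ny[OF bk])
      also have "\<dots> = \<kappa> (\<theta> * (\<Sum>i<k. c i * \<sigma>1 (b i)) + c k * (\<theta> * \<sigma>1 (b k)))"
        by (simp add: Kadd Kmult)
      also have "\<theta> * (\<Sum>i<k. c i * \<sigma>1 (b i)) + c k * (\<theta> * \<sigma>1 (b k)) = \<theta> * (\<Sum>i<Suc k. c i * \<sigma>1 (b i))"
        by (simp add: algebra_simps)
      finally show ?case by blast
    qed
  qed
  obtain u where Nu: "witt_nsmul p p u = \<kappa> \<theta>"
  proof -
    have "\<exists>(k::nat) c b. (\<forall>i<k. b i \<in> I) \<and> (1::'a) = (\<Sum>i<k. c i * \<sigma>1 (b i))"
      using gen by (rule allE)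
    then obtain k :: nat and c b where "\<forall>i<k. b i \<in> I" and one: "(1::'a) = (\<Sum>i<k. c i * \<sigma>1 (b i))"
      by blast
    then obtain w where "witt_nsmul p p w = \<kappa> (\<theta> * (\<Sum>i<k. c i * \<sigma>1 (b i)))" using sumclaim by blast
    then have "witt_nsmul p p w = \<kappa> \<theta>" by (simp flip: one)
    then show ?thesis using that by blast
  qed
  have f1prop: "\<And>a. a \<in> I \<Longrightarrow> witt_f1 (\<kappa> a) = witt_mult p u (\<kappa> (\<sigma>1 a))"
  proof -
    fix a assume a: "a \<in> I"
    have "witt_nsmul p p (witt_f1 (\<kappa> a)) = witt_nsmul p p (witt_mult p u (\<kappa> (\<sigma>1 a)))"
      by (simp add: Ny[OF a] nsmul_mult_l[OF pr] Nu)
    then show "witt_f1 (\<kappa> a) = witt_mult p u (\<kappa> (\<sigma>1 a))" by (rule nsmul_cancel[OF pr tfW])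
  qed
  have radR: "\<forall>r::'r. (1 - of_nat p * r) dvd 1"
  proof
    fix r :: 'r
    obtain s where s: "r = \<pi> s" using sj by (metis surj_def)
    have "0 \<in> I" using Idef rh_zero[OF h\<pi>] by simp
    then have "0 + of_nat p * s \<in> jacobson_radical" using jac by blast
    then have "\<forall>b. (1 - (0 + of_nat p * s) * b) dvd 1" unfolding jacobson_radical_def by simp
    then have "(1 - (0 + of_nat p * s) * 1) dvd 1" by blast
    then obtain q where q: "1 = (1 - of_nat p * s) * q" by (auto simp: dvd_def)
    have "\<pi> 1 = \<pi> ((1 - of_nat p * s) * q)" using q by simp
    then have "1 = (1 - of_nat p * \<pi> s) * \<pi> q"
      by (simp add: rh_mult[OF h\<pi>] rh_diff[OF h\<pi>] rh_one[OF h\<pi>] rh_of_nat[OF h\<pi>])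
    then show "(1 - of_nat p * r) dvd 1" using s by (metis dvdI)
  qed
  \<comment> \<open>u is a unit\<close>
  have Ke: "\<kappa> (\<sigma> \<theta>) = witt_add p (wpow p p (\<kappa> \<theta>)) (witt_nsmul p p (\<kappa> e))"
  proof -
    have "\<sigma> \<theta> = \<theta> ^ p + of_nat p * e" using the by (simp add: algebra_simps)
    then show ?thesis by (simp add: Kadd Kpow Knat)
  qed
  define Q where "Q = witt_nsmul p (p ^ (p - 1)) (wpow p p u)"
  have "witt_nsmul p p (witt_frob p u) = witt_nsmul p p (witt_add p Q (\<kappa> e))"
  proof -
    have "witt_nsmul p p (witt_frob p u) = witt_frob p (\<kappa> \<theta>)" by (simp add: frob_nsmul[OF pr, symmetric] Nu)
    also have "\<dots> = witt_add p (wpow p p (\<kappa> \<theta>)) (witt_nsmul p p (\<kappa> e))" by (simp add: Kfrob Ke)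
    also have "wpow p p (\<kappa> \<theta>) = witt_nsmul p (p ^ p) (wpow p p u)" by (simp add: Nu[symmetric] wpow_nsmul[OF pr])
    also have "\<dots> = witt_nsmul p p Q"
    proof -
      have ps: "p = Suc (p - 1)" using pp by simp
      have "p ^ p = p ^ Suc (p - 1)" using ps by simp
      also have "\<dots> = p * p ^ (p - 1)" by (rule power_Suc)
      finally have pe: "p * p ^ (p - 1) = p ^ p" by simp
      show ?thesis by (simp only: Q_def nsmul_nsmul[OF pr] pe)
    qed
    finally show ?thesis by (simp only: nsmul_add[OF pr])
  qed
  then have fu: "witt_frob p u = witt_add p Q (\<kappa> e)" by (rule nsmul_cancel[OF pr tfW])
  have comp: "u 0 ^ p + of_nat p * u 1 = of_nat (p ^ (p - 1)) * u 0 ^ p + \<pi> e"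
    using arg_cong[OF fu, of "\<lambda>z. z 0"]
    by (simp add: c0_frob[OF pr] c0_add[OF pr] Q_def c0_nsmul[OF pr] c0_wpow[OF pr] K0)
  have ue: "\<pi> e dvd 1"
  proof -
    obtain q where "1 = e * q" using eu by (auto simp: dvd_def)
    then have "1 = \<pi> e * \<pi> q" by (metis rh_mult[OF h\<pi>] rh_one[OF h\<pi>])
    then show ?thesis by (metis dvdI)
  qed
  define E where "E = rinv (\<pi> e)"
  have EE: "\<pi> e * E = 1" using rinv[OF ue] by (simp add: E_def)
  obtain p' where p': "p = Suc (Suc p')" using pr by (metis prime_ge_2_nat add_2_eq_Suc le_Suc_ex)
  have key: "u 0 ^ p * (1 - of_nat p * of_nat (p ^ p')) = \<pi> e * (1 - of_nat p * (u 1 * E))"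
  proof -
    have "u 0 ^ p * (1 - of_nat p * of_nat (p ^ p')) = u 0 ^ p - of_nat (p ^ (p - 1)) * u 0 ^ p"
      by (simp add: p' algebra_simps)
    also have "\<dots> = \<pi> e - of_nat p * u 1" using comp by (simp add: algebra_simps)
    also have "\<dots> = \<pi> e * (1 - of_nat p * (u 1 * E))"
    proof -
      have "\<pi> e * (1 - of_nat p * (u 1 * E)) = \<pi> e - of_nat p * u 1 * (\<pi> e * E)" by (simp add: algebra_simps)
      then show ?thesis using EE by simp
    qed
    finally show ?thesis .
  qed
  have "\<pi> e * (1 - of_nat p * (u 1 * E)) dvd 1" using ue radR by (simp add: unit_mult)
  then have "u 0 ^ p dvd 1" using key by (metis dvd_mult_left)
  then have u0: "u 0 dvd 1" using p' by (metis dvd_mult_left power_Suc)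
  have uu: "witt_unit p u" by (rule unit_crit[where x=u, OF pr radR u0])
  show "\<exists>u. witt_frame_uhom p I \<sigma> \<sigma>1 u (\<lambda>a. witt_map \<pi> (\<delta> a)) \<and> (\<forall>a. witt_map \<pi> (\<delta> a) 0 = \<pi> a)"
  proof (rule exI[of _ u], intro conjI)
    show "witt_frame_uhom p I \<sigma> \<sigma>1 u (\<lambda>a. witt_map \<pi> (\<delta> a))"
      unfolding witt_frame_uhom_def
      using uu Kadd Kmult Kone KI Kfrob f1prop unfolding \<kappa>_def by blast
    show "\<forall>a. witt_map \<pi> (\<delta> a) 0 = \<pi> a" using K0 unfolding \<kappa>_def by blast
  qed
next
  show "\<forall>(I' :: 'b::comm_ring_1 set) (\<pi>' :: 'b \<Rightarrow> 's::comm_ring_1) \<sigma>' \<sigma>1' \<delta>' v \<alpha>.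
          kappa_frame p I' \<pi>' \<sigma>' \<sigma>1' \<and> witt_delta p \<sigma>' \<delta>' \<and>
          frame_uhom I \<sigma> \<sigma>1 I' \<sigma>' \<sigma>1' v \<alpha> \<longrightarrow>
          (\<forall>a. witt_map \<pi>' (witt_map \<alpha> (\<delta> a)) = witt_map \<pi>' (\<delta>' (\<alpha> a)))"
  proof (intro allI impI)
    fix I' :: "'b set" and \<pi>' :: "'b \<Rightarrow> 's" and \<sigma>' \<sigma>1' \<delta>' v \<alpha> a
    assume h: "kappa_frame p I' \<pi>' \<sigma>' \<sigma>1' \<and> witt_delta p \<sigma>' \<delta>' \<and> frame_uhom I \<sigma> \<sigma>1 I' \<sigma>' \<sigma>1' v \<alpha>"
    have tf': "\<forall>a::'b. of_nat p * a = 0 \<longrightarrow> a = 0" using h unfolding kappa_frame_def by blast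
    have h\<alpha>: "ring_hom_on \<alpha>" and comm: "\<forall>a. \<sigma>' (\<alpha> a) = \<alpha> (\<sigma> a)"
      using h unfolding frame_uhom_def by blast+
    have "witt_map \<alpha> (\<delta> a) = \<delta>' (\<alpha> a)"
      by (rule functorial[OF assms(1) tf' assms(3) _ h\<alpha> comm]) (use h in blast)
    then show "witt_map \<pi>' (witt_map \<alpha> (\<delta> a)) = witt_map \<pi>' (\<delta>' (\<alpha> a))" by simp
  qed
qed


end
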